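(* Let $R$ be a profile of lexicographic preferences and $P=\mathrm{MPS}(R)$. For every type $i$, the type-$i$ marginal assignment $P^i$, defined by $P^i_{j,o}=\sum_{x\in\mathcal D:\,x_i=o}p_{j,x}$ for $j\in N$, $o\in D_i$, equals the output of the single-type probabilistic serial mechanism $\mathrm{PS}$ applied to the items $D_i$ and the profile $R^i=(\rhd^i_j)_{j\le n}$.
   Context: Setting: $N=\{1,\dots,n\}$ agents; $M=D_1\cup\dots\cup D_p$ items with pairwise disjoint types, $|D_i|=n$, unit supply; bundles $\mathcal D=D_1\times\dots\times D_p$, $x_i$ the type-$i$ component. Lexicographic preference: importance order $\rhd_j$ over types and strict orders $\rhd^i_j$ on each $D_i$; $x\succ_j y$ iff there is a type $i$ with $x_i\rhd^i_j y_i$ and $x_{i'}=y_{i'}$ for all $i'\rhd_j i$. MPS: items start with supply $1$; a bundle is available if all its items have positive remaining supply. Continuously in time each agent eats her $\succ_j$-most-preferred available bundle at rate $1$ (each item of it consumed at rate $1$, $p_{j,x}$ growing at rate $1$); exhausted items make all bundles containing them unavailable; run until all items are exhausted. Single-type PS on a set $D$ of $n$ items with strict orders $\rhd_j$ on $D$: items start with supply $1$; continuously in time each agent eats at rate $1$ her $\rhd_j$-most-preferred item with positive remaining supply, until time $1$; the output matrix records how much of each item each agent ate. *)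

theory Defs
  imports Complex_Main "HOL-Library.FuncSet"
begin

text \<open>
Agents are 0..n-1, types are 0..p-1, items have an arbitrary type 'a.  Strict orders are relations:
(a,b) in r means "a is strictly preferred to b" (a \<rhd> b).
imp j is agent j's importance order on types, ord j i is agent j's order on D i.
Both the MPS and PS eating processes are piecewise linear; they are formalised as
the standard phase algorithm: in each phase every agent eats her current top
available bundle/item, the phase lasts until the first item in consumption is
exhausted (for PS also capped at time 1), then the supplies and the eaten
amounts are updated.  Every nontrivial phase exhausts an item (or ends PS at time 1),
so finitely many iterations of the phase step give the final outcome.
\<close>

definition bundles :: "nat \<Rightarrow> (nat \<Rightarrow> 'a set) \<Rightarrow> (nat \<Rightarrow> 'a) set" where
  "bundles p D = PiE {..<p} D"

definition all_items :: "nat \<Rightarrow> (nat \<Rightarrow> 'a set) \<Rightarrow> 'a set" where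
  "all_items p D = (\<Union>i<p. D i)"

definition lex_pref :: "nat \<Rightarrow> nat rel \<Rightarrow> (nat \<Rightarrow> 'a rel) \<Rightarrow> (nat \<Rightarrow> 'a) \<Rightarrow> (nat \<Rightarrow> 'a) \<Rightarrow> bool" where
  "lex_pref p imp ord x y \<longleftrightarrow>
     (\<exists>i<p. (x i, y i) \<in> ord i \<and> (\<forall>i'<p. (i', i) \<in> imp \<longrightarrow> x i' = y i'))"

definition lex_setting ::
  "nat \<Rightarrow> nat \<Rightarrow> (nat \<Rightarrow> 'a set) \<Rightarrow> (nat \<Rightarrow> nat rel) \<Rightarrow> (nat \<Rightarrow> nat \<Rightarrow> 'a rel) \<Rightarrow> bool" where
  "lex_setting n p D imp ord \<longleftrightarrow>
     (\<forall>i<p. finite (D i) \<and> card (D i) = n) \<and>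
     (\<forall>i<p. \<forall>i'<p. i \<noteq> i' \<longrightarrow> D i \<inter> D i' = {}) \<and>
     (\<forall>j<n. strict_linear_order_on {..<p} (imp j) \<and> imp j \<subseteq> {..<p} \<times> {..<p} \<and>
        (\<forall>i<p. strict_linear_order_on (D i) (ord j i) \<and> ord j i \<subseteq> D i \<times> D i))"

definition mps_avail :: "nat \<Rightarrow> (nat \<Rightarrow> 'a set) \<Rightarrow> ('a \<Rightarrow> real) \<Rightarrow> (nat \<Rightarrow> 'a) set" where
  "mps_avail p D s = {x \<in> bundles p D. \<forall>i<p. s (x i) > 0}"

definition mps_top ::
  "nat \<Rightarrow> (nat \<Rightarrow> 'a set) \<Rightarrow> (nat \<Rightarrow> nat rel) \<Rightarrow> (nat \<Rightarrow> nat \<Rightarrow> 'a rel) \<Rightarrow> ('a \<Rightarrow> real) \<Rightarrow> nat \<Rightarrow> (nat \<Rightarrow> 'a)" where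
  "mps_top p D imp ord s j =
     (THE x. x \<in> mps_avail p D s \<and>
        (\<forall>y\<in>mps_avail p D s. y \<noteq> x \<longrightarrow> lex_pref p (imp j) (ord j) x y))"

definition mps_rate ::
  "nat \<Rightarrow> nat \<Rightarrow> (nat \<Rightarrow> 'a set) \<Rightarrow> (nat \<Rightarrow> nat rel) \<Rightarrow> (nat \<Rightarrow> nat \<Rightarrow> 'a rel) \<Rightarrow> ('a \<Rightarrow> real) \<Rightarrow> 'a \<Rightarrow> real" where
  "mps_rate n p D imp ord s b = real (card {j. j < n \<and> (\<exists>i<p. mps_top p D imp ord s j i = b)})"

definition mps_delta ::
  "nat \<Rightarrow> nat \<Rightarrow> (nat \<Rightarrow> 'a set) \<Rightarrow> (nat \<Rightarrow> nat rel) \<Rightarrow> (nat \<Rightarrow> nat \<Rightarrow> 'a rel) \<Rightarrow> ('a \<Rightarrow> real) \<Rightarrow> real" where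
  "mps_delta n p D imp ord s =
     Min {s b / mps_rate n p D imp ord s b | b. b \<in> all_items p D \<and> mps_rate n p D imp ord s b > 0}"

definition mps_step ::
  "nat \<Rightarrow> nat \<Rightarrow> (nat \<Rightarrow> 'a set) \<Rightarrow> (nat \<Rightarrow> nat rel) \<Rightarrow> (nat \<Rightarrow> nat \<Rightarrow> 'a rel)
   \<Rightarrow> ('a \<Rightarrow> real) \<times> (nat \<Rightarrow> (nat \<Rightarrow> 'a) \<Rightarrow> real) \<Rightarrow> ('a \<Rightarrow> real) \<times> (nat \<Rightarrow> (nat \<Rightarrow> 'a) \<Rightarrow> real)" where
  "mps_step n p D imp ord st =
     (let s = fst st; P = snd st in
      if mps_avail p D s = {} then st
      else (let d = mps_delta n p D imp ord s in
            ((\<lambda>b. s b - d * mps_rate n p D imp ord s b),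
             (\<lambda>j x. P j x + (if j < n \<and> x = mps_top p D imp ord s j then d else 0)))))"

text \<open>MPS(R): p j x is the amount of bundle x eaten by agent j.\<close>
definition MPS ::
  "nat \<Rightarrow> nat \<Rightarrow> (nat \<Rightarrow> 'a set) \<Rightarrow> (nat \<Rightarrow> nat rel) \<Rightarrow> (nat \<Rightarrow> nat \<Rightarrow> 'a rel) \<Rightarrow> nat \<Rightarrow> (nat \<Rightarrow> 'a) \<Rightarrow> real" where
  "MPS n p D imp ord =
     snd ((mps_step n p D imp ord ^^ card (all_items p D)) (\<lambda>_. 1, \<lambda>_ _. 0))"

definition marginal ::
  "nat \<Rightarrow> (nat \<Rightarrow> 'a set) \<Rightarrow> (nat \<Rightarrow> (nat \<Rightarrow> 'a) \<Rightarrow> real) \<Rightarrow> nat \<Rightarrow> nat \<Rightarrow> 'a \<Rightarrow> real" where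
  "marginal p D P i j b = (\<Sum>x\<in>{x \<in> bundles p D. x i = b}. P j x)"

definition ps_avail :: "'a set \<Rightarrow> ('a \<Rightarrow> real) \<Rightarrow> 'a set" where
  "ps_avail D s = {b \<in> D. s b > 0}"

definition ps_top :: "'a set \<Rightarrow> (nat \<Rightarrow> 'a rel) \<Rightarrow> ('a \<Rightarrow> real) \<Rightarrow> nat \<Rightarrow> 'a" where
  "ps_top D r s j =
     (THE b. b \<in> ps_avail D s \<and> (\<forall>b'\<in>ps_avail D s. b' \<noteq> b \<longrightarrow> (b, b') \<in> r j))"

definition ps_rate :: "nat \<Rightarrow> 'a set \<Rightarrow> (nat \<Rightarrow> 'a rel) \<Rightarrow> ('a \<Rightarrow> real) \<Rightarrow> 'a \<Rightarrow> real" where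
  "ps_rate n D r s b = real (card {j. j < n \<and> ps_top D r s j = b})"

text \<open>state: (current time, remaining supplies, eaten amounts); phases are capped at time 1\<close>
definition ps_step ::
  "nat \<Rightarrow> 'a set \<Rightarrow> (nat \<Rightarrow> 'a rel)
   \<Rightarrow> real \<times> ('a \<Rightarrow> real) \<times> (nat \<Rightarrow> 'a \<Rightarrow> real) \<Rightarrow> real \<times> ('a \<Rightarrow> real) \<times> (nat \<Rightarrow> 'a \<Rightarrow> real)" where
  "ps_step n D r st =
     (case st of (t, s, Q) \<Rightarrow>
      if ps_avail D s = {} \<or> t \<ge> 1 then st
      else (let d = min (1 - t) (Min {s b / ps_rate n D r s b | b. b \<in> D \<and> ps_rate n D r s b > 0}) in
            (t + d,
             (\<lambda>b. s b - d * ps_rate n D r s b),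
             (\<lambda>j b. Q j b + (if j < n \<and> b = ps_top D r s j then d else 0)))))"

text \<open>PS(D, r): Q j b is the amount of item b eaten by agent j.\<close>
definition PS :: "nat \<Rightarrow> 'a set \<Rightarrow> (nat \<Rightarrow> 'a rel) \<Rightarrow> nat \<Rightarrow> 'a \<Rightarrow> real" where
  "PS n D r = snd (snd ((ps_step n D r ^^ (card D + 1)) (0, \<lambda>_. 1, \<lambda>_ _. 0)))"

end

theory Submission
  imports Defs
begin

lemma slo_top:
  assumes "finite A" "A \<noteq> {}" "A \<subseteq> X" "trans R" "irrefl R" "total_on X R"
  shows "\<exists>b\<in>A. \<forall>b'\<in>A. b' \<noteq> b \<longrightarrow> (b, b') \<in> R"
  using assms(1,2,3)
proof (induction A rule: finite_ne_induct)
  case (singleton x) then show ?case by auto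
next
  case (insert x F)
  then obtain b where b: "b \<in> F" "\<forall>b'\<in>F. b' \<noteq> b \<longrightarrow> (b, b') \<in> R" by auto
  show ?case
  proof (cases "(x, b) \<in> R")
    case True
    then show ?thesis using b assms(4) unfolding trans_def by (metis insert_iff)
  next
    case False
    then have "(b, x) \<in> R" using assms(6) insert b unfolding total_on_def by auto
    then show ?thesis using b by auto
  qed
qed

lemma slo_top1:
  assumes "finite A" "A \<noteq> {}" "A \<subseteq> X" "trans R" "irrefl R" "total_on X R"
  shows "\<exists>!b. b\<in>A \<and> (\<forall>b'\<in>A. b' \<noteq> b \<longrightarrow> (b, b') \<in> R)"
proof -
  obtain b where b: "b\<in>A" "\<forall>b'\<in>A. b' \<noteq> b \<longrightarrow> (b, b') \<in> R" using slo_top[OF assms] by blast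
  show ?thesis
  proof (rule ex1I[of _ b])
    fix c assume c: "c \<in> A \<and> (\<forall>b'\<in>A. b' \<noteq> c \<longrightarrow> (c, b') \<in> R)"
    show "c = b"
    proof (rule ccontr)
      assume "c \<noteq> b"
      then have "(b,c) \<in> R" "(c,b) \<in> R" using b c by auto
      then have "(b,b) \<in> R" using assms(4) unfolding trans_def by blast
      then show False using assms(5) unfolding irrefl_def by blast
    qed
  qed (use b in auto)
qed

lemma ps_top_prop:
  assumes "finite E" "ps_avail E s \<noteq> {}" "strict_linear_order_on E (r j)"
  shows "ps_top E r s j \<in> ps_avail E s \<and> (\<forall>b'\<in>ps_avail E s. b' \<noteq> ps_top E r s j \<longrightarrow> (ps_top E r s j, b') \<in> r j)"
proof -
  have "\<exists>!b. b\<in>ps_avail E s \<and> (\<forall>b'\<in>ps_avail E s. b' \<noteq> b \<longrightarrow> (b, b') \<in> r j)"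
    by (rule slo_top1[where X=E]) (use assms in \<open>auto simp: ps_avail_def strict_linear_order_on_def\<close>)
  then show ?thesis unfolding ps_top_def by (rule theI')
qed

lemma ps_top_in:
  assumes "finite E" "ps_avail E s \<noteq> {}" "strict_linear_order_on E (r j)"
  shows "ps_top E r s j \<in> E" "s (ps_top E r s j) > 0"
  using ps_top_prop[of E s r j, OF assms] by (auto simp: ps_avail_def)


definition gstep :: "nat \<Rightarrow> 'a set \<Rightarrow> (nat \<Rightarrow> 'a rel) \<Rightarrow> real
   \<Rightarrow> real \<times> ('a \<Rightarrow> real) \<times> (nat \<Rightarrow> 'a \<Rightarrow> real) \<Rightarrow> real \<times> ('a \<Rightarrow> real) \<times> (nat \<Rightarrow> 'a \<Rightarrow> real)" where
  "gstep n E r d st = (case st of (t, s, Q) \<Rightarrow>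
     (t + d, (\<lambda>b. s b - d * ps_rate n E r s b),
      (\<lambda>j b. Q j b + (if j < n \<and> b = ps_top E r s j then d else 0))))"

definition mr :: "nat \<Rightarrow> 'a set \<Rightarrow> (nat \<Rightarrow> 'a rel) \<Rightarrow> ('a \<Rightarrow> real) \<Rightarrow> real" where
  "mr n E r s = Min {s b / ps_rate n E r s b | b. b \<in> E \<and> ps_rate n E r s b > 0}"

definition psI :: "nat \<Rightarrow> 'a set \<Rightarrow> (nat \<Rightarrow> 'a rel) \<Rightarrow> nat \<Rightarrow> real \<times> ('a \<Rightarrow> real) \<times> (nat \<Rightarrow> 'a \<Rightarrow> real)" where
  "psI n E r k = (ps_step n E r ^^ k) (0, \<lambda>_. 1, \<lambda>_ _. 0)"

lemma gstep0: "gstep n E r 0 st = st"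
  by (cases st) (auto simp: gstep_def)

lemma ps_top_cong: "ps_avail E s = ps_avail E s' \<Longrightarrow> ps_top E r s = ps_top E r s'"
  unfolding ps_top_def by (simp add: fun_eq_iff)

lemma ps_rate_cong: "ps_avail E s = ps_avail E s' \<Longrightarrow> ps_rate n E r s = ps_rate n E r s'"
proof -
  assume a: "ps_avail E s = ps_avail E s'"
  show ?thesis unfolding ps_rate_def ps_top_cong[OF a] ..
qed

lemma ps_avail_cong: "(\<And>b. b \<in> E \<Longrightarrow> s b = s' b) \<Longrightarrow> ps_avail E s = ps_avail E s'"
  unfolding ps_avail_def by auto

lemma ps_step_term: "\<not> (ps_avail E s \<noteq> {} \<and> t < 1) \<Longrightarrow> ps_step n E r (t, s, Q) = (t, s, Q)"
  unfolding ps_step_def by auto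

lemma ps_step_nonterm: "ps_avail E s \<noteq> {} \<Longrightarrow> t < 1 \<Longrightarrow>
   ps_step n E r (t, s, Q) = gstep n E r (min (1 - t) (mr n E r s)) (t, s, Q)"
  unfolding ps_step_def gstep_def mr_def by (auto simp: Let_def)

locale PSL =
  fixes n :: nat and E :: "'a set" and r :: "nat \<Rightarrow> 'a rel"
  assumes finE: "finite E" and cardE: "card E = n" and slo: "\<And>j. j < n \<Longrightarrow> strict_linear_order_on E (r j)"
    and npos: "0 < n"
begin

lemma top_in: "ps_avail E s \<noteq> {} \<Longrightarrow> j < n \<Longrightarrow> ps_top E r s j \<in> ps_avail E s"
  using ps_top_prop[of E s r j, OF finE _ slo] by blast

lemma rate_pos: "ps_avail E s \<noteq> {} \<Longrightarrow> ps_rate n E r s b > 0 \<Longrightarrow> b \<in> ps_avail E s"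
proof -
  assume a: "ps_avail E s \<noteq> {}" "ps_rate n E r s b > 0"
  then have "{j. j < n \<and> ps_top E r s j = b} \<noteq> {}" unfolding ps_rate_def by (metis card.empty of_nat_0 less_irrefl)
  then obtain j where "j < n" "ps_top E r s j = b" by auto
  then show ?thesis using top_in[OF a(1)] by auto
qed

lemma rate_nonneg: "ps_rate n E r s b \<ge> 0"
  unfolding ps_rate_def by simp

lemma rate_zero: "ps_avail E s \<noteq> {} \<Longrightarrow> b \<notin> ps_avail E s \<Longrightarrow> ps_rate n E r s b = 0"
  using rate_pos rate_nonneg by (metis less_eq_real_def)

lemma rate_sum: "ps_avail E s \<noteq> {} \<Longrightarrow> (\<Sum>b\<in>E. ps_rate n E r s b) = real n"
proof -
  assume a: "ps_avail E s \<noteq> {}"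
  have "(\<Sum>b\<in>E. sum (\<lambda>_. 1::real) {j. j \<in> {..<n} \<and> ps_top E r s j = b}) = sum (\<lambda>_. 1::real) {..<n}"
    by (rule sum.group) (use finE top_in[OF a] in \<open>auto simp: ps_avail_def\<close>)
  then show ?thesis unfolding ps_rate_def by simp
qed

definition RS :: "('a \<Rightarrow> real) \<Rightarrow> real set" where
  "RS s = {s b / ps_rate n E r s b | b. b \<in> E \<and> ps_rate n E r s b > 0}"

lemma RS_img: "RS s = (\<lambda>b. s b / ps_rate n E r s b) ` {b\<in>E. ps_rate n E r s b > 0}"
  unfolding RS_def by blast

lemma RS_fin: "finite (RS s)"
  unfolding RS_img using finE by simp

lemma RS_ne: "ps_avail E s \<noteq> {} \<Longrightarrow> RS s \<noteq> {}"
proof -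
  assume a: "ps_avail E s \<noteq> {}"
  let ?b = "ps_top E r s 0"
  have "0 \<in> {j. j < n \<and> ps_top E r s j = ?b}" using npos by auto
  moreover have "finite {j. j < n \<and> ps_top E r s j = ?b}" by simp
  ultimately have "card {j. j < n \<and> ps_top E r s j = ?b} > 0" using card_gt_0_iff by blast
  then have "ps_rate n E r s ?b > 0" unfolding ps_rate_def by simp
  moreover have "?b \<in> E" using top_in[OF a npos] by (auto simp: ps_avail_def)
  ultimately show ?thesis unfolding RS_def by blast
qed

lemma mr_eq: "mr n E r s = Min (RS s)"
  unfolding mr_def RS_def ..

lemma mr_le: "b \<in> E \<Longrightarrow> ps_rate n E r s b > 0 \<Longrightarrow> mr n E r s \<le> s b / ps_rate n E r s b"
  unfolding mr_eq by (rule Min_le[OF RS_fin]) (auto simp: RS_def)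

lemma mr_pos: "ps_avail E s \<noteq> {} \<Longrightarrow> mr n E r s > 0"
  unfolding mr_eq
proof -
  assume a: "ps_avail E s \<noteq> {}"
  have "\<forall>x\<in>RS s. x > 0"
    using rate_pos[OF a] by (auto simp: RS_def ps_avail_def)
  then show "Min (RS s) > 0" using Min_gr_iff[OF RS_fin RS_ne[OF a]] by blast
qed

lemma mr_argmin: "ps_avail E s \<noteq> {} \<Longrightarrow> \<exists>b\<in>E. ps_rate n E r s b > 0 \<and> mr n E r s = s b / ps_rate n E r s b"
proof -
  assume a: "ps_avail E s \<noteq> {}"
  have "Min (RS s) \<in> RS s" by (rule Min_in[OF RS_fin RS_ne[OF a]])
  then show ?thesis unfolding mr_eq RS_def by auto
qed

lemma avail_keep:
  assumes a: "ps_avail E s \<noteq> {}" and d: "d < mr n E r s"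
  shows "ps_avail E (\<lambda>b. s b - d * ps_rate n E r s b) = ps_avail E s"
proof -
  have "b \<in> E \<Longrightarrow> (s b - d * ps_rate n E r s b > 0) = (s b > 0)" for b
  proof -
    assume b: "b \<in> E"
    show ?thesis
    proof (cases "ps_rate n E r s b > 0")
      case True
      then have "d < s b / ps_rate n E r s b" using mr_le[OF b True] d by linarith
      then have "d * ps_rate n E r s b < s b" using True by (simp add: pos_less_divide_eq)
      moreover have "s b > 0" using rate_pos[OF a True] by (auto simp: ps_avail_def)
      ultimately show ?thesis by auto
    next
      case False
      then have "ps_rate n E r s b = 0" using rate_nonneg[of s b] by linarith
      then show ?thesis by simp
    qed
  qed
  then show ?thesis unfolding ps_avail_def by auto
qed

lemma gstep_add:
  assumes a: "ps_avail E s \<noteq> {}" and d: "d1 < mr n E r s"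
  shows "gstep n E r d2 (gstep n E r d1 (t, s, Q)) = gstep n E r (d1 + d2) (t, s, Q)"
proof -
  have av: "ps_avail E (\<lambda>b. s b - d1 * ps_rate n E r s b) = ps_avail E s" by (rule avail_keep[OF a d])
  show ?thesis unfolding gstep_def
    using ps_rate_cong[OF av, of n r] ps_top_cong[OF av, of r, THEN fun_cong]
    by (auto simp: algebra_simps fun_eq_iff)
qed

lemma mr_bound:
  assumes a: "ps_avail E s \<noteq> {}" and d1: "d1 < mr n E r s"
    and h: "\<forall>b\<in>E. ps_rate n E r s b > 0 \<longrightarrow> d * ps_rate n E r s b \<le> s b - d1 * ps_rate n E r s b"
  shows "d1 + d \<le> mr n E r s"
  unfolding mr_eq
proof (subst Min_ge_iff[OF RS_fin RS_ne[OF a]], intro ballI)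
  fix x assume "x \<in> RS s"
  then obtain b where b: "b \<in> E" "ps_rate n E r s b > 0" "x = s b / ps_rate n E r s b" unfolding RS_def by auto
  then have "(d1 + d) * ps_rate n E r s b \<le> s b" using h by (auto simp: algebra_simps)
  then show "d1 + d \<le> x" using b by (simp add: pos_le_divide_eq)
qed

lemma psI_Suc: "psI n E r (Suc k) = ps_step n E r (psI n E r k)"
  unfolding psI_def by simp

lemma psI_absorb:
  assumes "\<not> (ps_avail E (fst (snd (psI n E r k))) \<noteq> {} \<and> fst (psI n E r k) < 1)"
  shows "psI n E r (k + m) = psI n E r k"
proof (induction m)
  case 0 then show ?case by simp
next
  case (Suc m)
  obtain t s Q where e: "psI n E r k = (t, s, Q)" by (metis prod.exhaust)
  have "psI n E r (k + Suc m) = ps_step n E r (psI n E r k)" using Suc by (simp add: psI_Suc)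
  also have "\<dots> = psI n E r k" using assms unfolding e by (simp add: ps_step_term)
  finally show ?case .
qed

lemma psI_count:
  "\<not> (ps_avail E (fst (snd (psI n E r k))) \<noteq> {} \<and> fst (psI n E r k) < 1)
   \<or> k \<le> card {b\<in>E. fst (snd (psI n E r k)) b \<le> 0}"
proof (induction k)
  case 0 then show ?case by simp
next
  case (Suc k)
  obtain t s Q where e: "psI n E r k = (t, s, Q)" by (metis prod.exhaust)
  show ?case
  proof (cases "ps_avail E s \<noteq> {} \<and> t < 1")
    case False
    then have "psI n E r (Suc k) = psI n E r k" using e by (simp add: psI_Suc ps_step_term)
    then show ?thesis using False e by simp
  next
    case True
    then have nt: "ps_avail E s \<noteq> {}" "t < 1" by auto
    have k: "k \<le> card {b\<in>E. s b \<le> 0}" using Suc True e by simp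
    let ?d = "min (1 - t) (mr n E r s)"
    have st: "psI n E r (Suc k) = gstep n E r ?d (t, s, Q)"
      using e nt by (simp add: psI_Suc ps_step_nonterm)
    show ?thesis
    proof (cases "mr n E r s < 1 - t")
      case False
      then have "fst (psI n E r (Suc k)) = 1" using st by (simp add: gstep_def)
      then show ?thesis by simp
    next
      case True
      then have dd: "?d = mr n E r s" by simp
      obtain b0 where b0: "b0 \<in> E" "ps_rate n E r s b0 > 0" "mr n E r s = s b0 / ps_rate n E r s b0"
        using mr_argmin[OF nt(1)] by blast
      let ?s' = "\<lambda>b. s b - mr n E r s * ps_rate n E r s b"
      have s': "fst (snd (psI n E r (Suc k))) = ?s'" using st dd by (simp add: gstep_def)
      have "?s' b0 = 0" using b0 by simp
      moreover have "s b0 > 0" using rate_pos[OF nt(1) b0(2)] by (auto simp: ps_avail_def)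
      moreover have "b \<in> E \<Longrightarrow> s b \<le> 0 \<Longrightarrow> ?s' b \<le> 0" for b
        using rate_zero[OF nt(1), of b] by (auto simp: ps_avail_def)
      ultimately have sub: "insert b0 {b\<in>E. s b \<le> 0} \<subseteq> {b\<in>E. ?s' b \<le> 0}" "b0 \<notin> {b\<in>E. s b \<le> 0}"
        using b0 by auto
      have "card (insert b0 {b\<in>E. s b \<le> 0}) \<le> card {b\<in>E. ?s' b \<le> 0}"
        by (rule card_mono[OF _ sub(1)]) (use finE in auto)
      then have "Suc k \<le> card {b\<in>E. ?s' b \<le> 0}" using sub(2) k finE by simp
      then show ?thesis using s' by simp
    qed
  qed
qed

lemma psI_n_term: "\<not> (ps_avail E (fst (snd (psI n E r n))) \<noteq> {} \<and> fst (psI n E r n) < 1)"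
proof (rule ccontr)
  assume nt: "\<not> \<not> (ps_avail E (fst (snd (psI n E r n))) \<noteq> {} \<and> fst (psI n E r n) < 1)"
  let ?s = "fst (snd (psI n E r n))"
  have "n \<le> card {b\<in>E. ?s b \<le> 0}" using psI_count[of n] nt by blast
  moreover have "card {b\<in>E. ?s b \<le> 0} \<le> card E" by (rule card_mono[OF finE]) auto
  ultimately have "card {b\<in>E. ?s b \<le> 0} = card E" using cardE by simp
  then have "{b\<in>E. ?s b \<le> 0} = E" by (metis (no_types, lifting) card_subset_eq finE mem_Collect_eq subsetI)
  then have "ps_avail E ?s = {}" unfolding ps_avail_def by force
  then show False using nt by blast
qed

lemma psI_final:
  assumes "\<not> (ps_avail E (fst (snd (psI n E r k))) \<noteq> {} \<and> fst (psI n E r k) < 1)"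
  shows "psI n E r (card E + 1) = psI n E r k"
proof (cases "k \<le> n + 1")
  case True
  have "psI n E r (k + (n + 1 - k)) = psI n E r k" by (rule psI_absorb[OF assms])
  then show ?thesis using True cardE by simp
next
  case False
  have "psI n E r (n + (k - n)) = psI n E r n" by (rule psI_absorb[OF psI_n_term])
  moreover have "psI n E r (n + 1) = psI n E r n" by (rule psI_absorb[OF psI_n_term])
  ultimately show ?thesis using False cardE by simp
qed

end

locale LS =
  fixes n p :: nat and D :: "nat \<Rightarrow> 'a set" and imp :: "nat \<Rightarrow> nat rel"
    and ord :: "nat \<Rightarrow> nat \<Rightarrow> 'a rel"
  assumes ls: "lex_setting n p D imp ord" and n0: "0 < n" and p0: "0 < p"
begin

lemma finD: "i < p \<Longrightarrow> finite (D i)" and cardD: "i < p \<Longrightarrow> card (D i) = n"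
  and disjD: "i < p \<Longrightarrow> i' < p \<Longrightarrow> i \<noteq> i' \<Longrightarrow> D i \<inter> D i' = {}"
  and imp_slo: "j < n \<Longrightarrow> strict_linear_order_on {..<p} (imp j)"
  and imp_sub: "j < n \<Longrightarrow> imp j \<subseteq> {..<p} \<times> {..<p}"
  and ord_slo: "j < n \<Longrightarrow> i < p \<Longrightarrow> strict_linear_order_on (D i) (ord j i)"
  using ls unfolding lex_setting_def by auto

lemma lex_asym:
  assumes j: "j < n" and xy: "lex_pref p (imp j) (ord j) x y" and yx: "lex_pref p (imp j) (ord j) y x"
  shows False
proof -
  obtain i where i: "i < p" "(x i, y i) \<in> ord j i" "\<forall>i'<p. (i', i) \<in> imp j \<longrightarrow> x i' = y i'"
    using xy unfolding lex_pref_def by auto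
  obtain k where k: "k < p" "(y k, x k) \<in> ord j k" "\<forall>i'<p. (i', k) \<in> imp j \<longrightarrow> y i' = x i'"
    using yx unfolding lex_pref_def by auto
  have oi: "trans (ord j i)" "irrefl (ord j i)" using ord_slo[OF j i(1)] by (auto simp: strict_linear_order_on_def)
  have ok: "irrefl (ord j k)" using ord_slo[OF j k(1)] by (auto simp: strict_linear_order_on_def)
  show False
  proof (cases "i = k")
    case True
    then have "(x i, x i) \<in> ord j i" using i k oi(1) unfolding trans_def by blast
    then show False using oi(2) unfolding irrefl_def by blast
  next
    case False
    then have "(i, k) \<in> imp j \<or> (k, i) \<in> imp j" using imp_slo[OF j] i k
      unfolding strict_linear_order_on_def total_on_def by auto
    then show False
    proof
      assume "(i, k) \<in> imp j"
      then have "y i = x i" using k i by auto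
      then show False using i(2) oi(2) unfolding irrefl_def by auto
    next
      assume "(k, i) \<in> imp j"
      then have "x k = y k" using k i by auto
      then show False using k(2) ok unfolding irrefl_def by auto
    qed
  qed
qed

definition topb :: "('a \<Rightarrow> real) \<Rightarrow> nat \<Rightarrow> nat \<Rightarrow> 'a" where
  "topb s j = (\<lambda>i. if i < p then ps_top (D i) (\<lambda>j. ord j i) s j else undefined)"

lemma avail_type:
  assumes "mps_avail p D s \<noteq> {}" "i < p"
  shows "ps_avail (D i) s \<noteq> {}"
proof -
  obtain x where "x \<in> mps_avail p D s" using assms by auto
  then have "x i \<in> ps_avail (D i) s" using assms(2)
    by (auto simp: mps_avail_def ps_avail_def bundles_def PiE_def Pi_def)
  then show ?thesis by auto
qed

lemma topb_avail:
  assumes "mps_avail p D s \<noteq> {}" "j < n"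
  shows "topb s j \<in> mps_avail p D s"
proof -
  have "\<And>i. i < p \<Longrightarrow> ps_top (D i) (\<lambda>j. ord j i) s j \<in> D i \<and> s (ps_top (D i) (\<lambda>j. ord j i) s j) > 0"
    using ps_top_in[of "D _" s "\<lambda>j. ord j _" j] finD avail_type[OF assms(1)] ord_slo[OF assms(2)] by blast
  then show ?thesis
    unfolding mps_avail_def bundles_def topb_def by (auto simp: PiE_def Pi_def extensional_def)
qed

lemma topb_best:
  assumes av: "mps_avail p D s \<noteq> {}" and j: "j < n" and y: "y \<in> mps_avail p D s" and ne: "y \<noteq> topb s j"
  shows "lex_pref p (imp j) (ord j) (topb s j) y"
proof -
  let ?A = "{i. i < p \<and> topb s j i \<noteq> y i}"
  have tb: "topb s j \<in> bundles p D" "y \<in> bundles p D" using topb_avail[OF av j] y by (auto simp: mps_avail_def)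
  have "?A \<noteq> {}"
  proof
    assume "?A = {}"
    then have "\<forall>i<p. topb s j i = y i" by auto
    then show False using ne tb unfolding bundles_def by (metis PiE_ext lessThan_iff)
  qed
  moreover have "finite ?A" by auto
  ultimately obtain i where i: "i \<in> ?A" "\<forall>i'\<in>?A. i' \<noteq> i \<longrightarrow> (i, i') \<in> imp j"
    using slo_top[of ?A "{..<p}" "imp j"] imp_slo[OF j] unfolding strict_linear_order_on_def by auto
  have imps: "trans (imp j)" "irrefl (imp j)" using imp_slo[OF j] unfolding strict_linear_order_on_def by auto
  have "(topb s j i, y i) \<in> ord j i"
  proof -
    have "y i \<in> ps_avail (D i) s" using y i(1) by (auto simp: mps_avail_def ps_avail_def bundles_def PiE_def Pi_def)
    moreover have "y i \<noteq> ps_top (D i) (\<lambda>j. ord j i) s j" using i(1) by (auto simp: topb_def)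
    ultimately show ?thesis
      using ps_top_prop[of "D i" s "\<lambda>j. ord j i" j, OF finD avail_type[OF av] ord_slo[OF j]] i(1)
      by (auto simp: topb_def)
  qed
  moreover have "\<forall>i'<p. (i', i) \<in> imp j \<longrightarrow> topb s j i' = y i'"
  proof (intro allI impI)
    fix i' assume "i' < p" "(i', i) \<in> imp j"
    show "topb s j i' = y i'"
    proof (rule ccontr)
      assume "topb s j i' \<noteq> y i'"
      then have "i' \<in> ?A" using \<open>i' < p\<close> by auto
      moreover have "i' \<noteq> i" using \<open>(i', i) \<in> imp j\<close> imps(2) unfolding irrefl_def by auto
      ultimately have "(i, i') \<in> imp j" using i by auto
      then have "(i, i) \<in> imp j" using \<open>(i', i) \<in> imp j\<close> imps(1) unfolding trans_def by blast
      then show False using imps(2) unfolding irrefl_def by auto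
    qed
  qed
  ultimately show ?thesis using i(1) unfolding lex_pref_def by auto
qed

lemma mps_top_eq:
  assumes av: "mps_avail p D s \<noteq> {}" and j: "j < n"
  shows "mps_top p D imp ord s j = topb s j"
  unfolding mps_top_def
proof (rule the_equality)
  show "topb s j \<in> mps_avail p D s \<and> (\<forall>y\<in>mps_avail p D s. y \<noteq> topb s j \<longrightarrow> lex_pref p (imp j) (ord j) (topb s j) y)"
    using topb_avail[OF av j] topb_best[OF av j] by auto
next
  fix x assume x: "x \<in> mps_avail p D s \<and> (\<forall>y\<in>mps_avail p D s. y \<noteq> x \<longrightarrow> lex_pref p (imp j) (ord j) x y)"
  show "x = topb s j"
  proof (rule ccontr)
    assume ne: "x \<noteq> topb s j"
    then have "lex_pref p (imp j) (ord j) x (topb s j)" using x topb_avail[OF av j] by auto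
    moreover have "lex_pref p (imp j) (ord j) (topb s j) x" using topb_best[OF av j] x ne by auto
    ultimately show False using lex_asym[OF j] by blast
  qed
qed


abbreviation rr :: "nat \<Rightarrow> nat \<Rightarrow> 'a rel" where "rr i \<equiv> (\<lambda>j. ord j i)"

lemma PSL_i: "i < p \<Longrightarrow> PSL n (D i) (rr i)"
  by unfold_locales (auto simp: finD cardD ord_slo n0)

lemma topb_in: "mps_avail p D s \<noteq> {} \<Longrightarrow> j < n \<Longrightarrow> i < p \<Longrightarrow> topb s j i \<in> D i \<and> s (topb s j i) > 0"
  using topb_avail[of s j] by (auto simp: mps_avail_def bundles_def PiE_def Pi_def)

lemma mps_rate_eq:
  assumes av: "mps_avail p D s \<noteq> {}" and i: "i < p" and b: "b \<in> D i"
  shows "mps_rate n p D imp ord s b = ps_rate n (D i) (rr i) s b"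
proof -
  have "{j. j < n \<and> (\<exists>i'<p. mps_top p D imp ord s j i' = b)} = {j. j < n \<and> ps_top (D i) (rr i) s j = b}"
  proof (intro set_eqI iffI)
    fix j assume "j \<in> {j. j < n \<and> (\<exists>i'<p. mps_top p D imp ord s j i' = b)}"
    then obtain i' where j: "j < n" "i' < p" "topb s j i' = b" using mps_top_eq[OF av] by auto
    then have "b \<in> D i'" using topb_in[OF av] by blast
    then have "i' = i" using disjD[OF i j(2)] b by blast
    then show "j \<in> {j. j < n \<and> ps_top (D i) (rr i) s j = b}" using j by (auto simp: topb_def)
  next
    fix j assume "j \<in> {j. j < n \<and> ps_top (D i) (rr i) s j = b}"
    then show "j \<in> {j. j < n \<and> (\<exists>i'<p. mps_top p D imp ord s j i' = b)}"
      using mps_top_eq[OF av] i by (auto simp: topb_def)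
  qed
  then show ?thesis unfolding mps_rate_def ps_rate_def by simp
qed

lemma fin_all: "finite (all_items p D)"
  unfolding all_items_def using finD by auto

lemma Di_all: "i < p \<Longrightarrow> D i \<subseteq> all_items p D"
  unfolding all_items_def by auto

lemma mps_rate_pos:
  assumes av: "mps_avail p D s \<noteq> {}" and pos: "mps_rate n p D imp ord s b > 0"
  shows "b \<in> all_items p D \<and> s b > 0"
proof -
  have "{j. j < n \<and> (\<exists>i'<p. mps_top p D imp ord s j i' = b)} \<noteq> {}"
    using pos unfolding mps_rate_def by (metis card.empty of_nat_0 less_irrefl)
  then obtain j i' where j: "j < n" "i' < p" "topb s j i' = b" using mps_top_eq[OF av] by auto
  then show ?thesis using topb_in[OF av j(1) j(2)] Di_all[OF j(2)] by auto
qed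

definition MS :: "('a \<Rightarrow> real) \<Rightarrow> real set" where
  "MS s = {s b / mps_rate n p D imp ord s b | b. b \<in> all_items p D \<and> mps_rate n p D imp ord s b > 0}"

lemma MS_fin: "finite (MS s)"
proof -
  have "MS s = (\<lambda>b. s b / mps_rate n p D imp ord s b) ` {b\<in>all_items p D. mps_rate n p D imp ord s b > 0}"
    unfolding MS_def by blast
  then show ?thesis using fin_all by simp
qed

lemma MS_ne: "mps_avail p D s \<noteq> {} \<Longrightarrow> MS s \<noteq> {}"
proof -
  assume av: "mps_avail p D s \<noteq> {}"
  let ?b = "topb s 0 0"
  have "0 \<in> {j. j < n \<and> (\<exists>i'<p. mps_top p D imp ord s j i' = ?b)}" using n0 p0 mps_top_eq[OF av n0] by auto
  moreover have "finite {j. j < n \<and> (\<exists>i'<p. mps_top p D imp ord s j i' = ?b)}" by simp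
  ultimately have "card {j. j < n \<and> (\<exists>i'<p. mps_top p D imp ord s j i' = ?b)} > 0" using card_gt_0_iff by blast
  then have "mps_rate n p D imp ord s ?b > 0" unfolding mps_rate_def by simp
  moreover have "?b \<in> all_items p D" using topb_in[OF av n0 p0] Di_all[OF p0] by auto
  ultimately show ?thesis unfolding MS_def by blast
qed

lemma delta_eq: "mps_delta n p D imp ord s = Min (MS s)"
  unfolding mps_delta_def MS_def ..

lemma delta_le:
  assumes "b \<in> all_items p D" "mps_rate n p D imp ord s b > 0"
  shows "mps_delta n p D imp ord s * mps_rate n p D imp ord s b \<le> s b"
proof -
  have "mps_delta n p D imp ord s \<le> s b / mps_rate n p D imp ord s b"
    unfolding delta_eq by (rule Min_le[OF MS_fin]) (use assms in \<open>auto simp: MS_def\<close>)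
  then show ?thesis using assms(2) by (simp add: pos_le_divide_eq)
qed

lemma delta_pos:
  assumes av: "mps_avail p D s \<noteq> {}"
  shows "mps_delta n p D imp ord s > 0"
proof -
  have "\<forall>x\<in>MS s. x > 0" using mps_rate_pos[OF av] by (auto simp: MS_def)
  then show ?thesis unfolding delta_eq using Min_gr_iff[OF MS_fin MS_ne[OF av]] by blast
qed

lemma delta_argmin:
  assumes av: "mps_avail p D s \<noteq> {}"
  shows "\<exists>b\<in>all_items p D. mps_rate n p D imp ord s b > 0 \<and>
           mps_delta n p D imp ord s = s b / mps_rate n p D imp ord s b"
proof -
  have "Min (MS s) \<in> MS s" by (rule Min_in[OF MS_fin MS_ne[OF av]])
  then show ?thesis unfolding delta_eq MS_def by auto
qed

lemma mps_step_nt: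
  "mps_avail p D s \<noteq> {} \<Longrightarrow> mps_step n p D imp ord (s, P) =
     ((\<lambda>b. s b - mps_delta n p D imp ord s * mps_rate n p D imp ord s b),
      (\<lambda>j x. P j x + (if j < n \<and> x = mps_top p D imp ord s j then mps_delta n p D imp ord s else 0)))"
  unfolding mps_step_def by (simp add: Let_def)

lemma mps_step_t: "mps_avail p D (fst st) = {} \<Longrightarrow> mps_step n p D imp ord st = st"
  unfolding mps_step_def by (simp add: Let_def)

definition projs :: "nat \<Rightarrow> ('a \<Rightarrow> real) \<Rightarrow> 'a \<Rightarrow> real" where
  "projs i s = (\<lambda>b. if b \<in> D i then s b else 1)"

lemma projs_avail: "ps_avail (D i) (projs i s) = ps_avail (D i) s"
  by (rule ps_avail_cong) (simp add: projs_def)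

lemma fin_bundles: "finite (bundles p D)"
  unfolding bundles_def by (rule finite_PiE) (auto simp: finD)

lemma proj_step:
  assumes av: "mps_avail p D s \<noteq> {}" and i: "i < p"
  defines "d \<equiv> mps_delta n p D imp ord s"
  shows "gstep n (D i) (rr i) d (T, projs i s, marginal p D P i) =
     (T + d, projs i (\<lambda>b. s b - d * mps_rate n p D imp ord s b),
      marginal p D (\<lambda>j x. P j x + (if j < n \<and> x = mps_top p D imp ord s j then d else 0)) i)"
proof -
  interpret Pi: PSL n "D i" "rr i" by (rule PSL_i[OF i])
  have avi: "ps_avail (D i) s \<noteq> {}" by (rule avail_type[OF av i])
  have rt: "ps_rate n (D i) (rr i) (projs i s) = ps_rate n (D i) (rr i) s"
    by (rule ps_rate_cong[OF projs_avail])
  have tp: "ps_top (D i) (rr i) (projs i s) = ps_top (D i) (rr i) s"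
    by (rule ps_top_cong[OF projs_avail])
  have S: "(\<lambda>b. projs i s b - d * ps_rate n (D i) (rr i) s b) = projs i (\<lambda>b. s b - d * mps_rate n p D imp ord s b)"
  proof
    fix b show "projs i s b - d * ps_rate n (D i) (rr i) s b = projs i (\<lambda>b. s b - d * mps_rate n p D imp ord s b) b"
    proof (cases "b \<in> D i")
      case True then show ?thesis using mps_rate_eq[OF av i True] by (simp add: projs_def)
    next
      case False
      then have "ps_rate n (D i) (rr i) s b = 0" using Pi.rate_zero[OF avi] by (auto simp: ps_avail_def)
      then show ?thesis using False by (simp add: projs_def)
    qed
  qed
  have Q: "marginal p D P i j b + (if j < n \<and> b = ps_top (D i) (rr i) s j then d else 0) =
        marginal p D (\<lambda>j x. P j x + (if j < n \<and> x = mps_top p D imp ord s j then d else 0)) i j b" for j b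
  proof -
    let ?B = "{x \<in> bundles p D. x i = b}"
    have fB: "finite ?B" using fin_bundles by simp
    have "marginal p D (\<lambda>j x. P j x + (if j < n \<and> x = mps_top p D imp ord s j then d else 0)) i j b
       = marginal p D P i j b + (\<Sum>x\<in>?B. (if j < n \<and> x = mps_top p D imp ord s j then d else 0))"
      unfolding marginal_def by (simp add: sum.distrib)
    also have "(\<Sum>x\<in>?B. (if j < n \<and> x = mps_top p D imp ord s j then d else 0)) =
         (if j < n \<and> b = ps_top (D i) (rr i) s j then d else 0)"
    proof (cases "j < n")
      case True
      have "(\<Sum>x\<in>?B. (if j < n \<and> x = mps_top p D imp ord s j then d else 0)) =
            (\<Sum>x\<in>?B. (if x = topb s j then d else 0))"
        using mps_top_eq[OF av True] True by simp
      also have "\<dots> = (if topb s j \<in> ?B then d else 0)" by (rule sum.delta[OF fB])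
      also have "\<dots> = (if j < n \<and> b = ps_top (D i) (rr i) s j then d else 0)"
        using topb_avail[OF av True] True i by (auto simp: mps_avail_def topb_def)
      finally show ?thesis .
    qed simp
    finally show ?thesis by simp
  qed
  show ?thesis unfolding gstep_def using S Q by (simp add: rt tp fun_eq_iff)
qed


definition mI :: "nat \<Rightarrow> ('a \<Rightarrow> real) \<times> (nat \<Rightarrow> (nat \<Rightarrow> 'a) \<Rightarrow> real)" where
  "mI k = (mps_step n p D imp ord ^^ k) (\<lambda>_. 1, \<lambda>_ _. 0)"

definition good :: "nat \<Rightarrow> real \<Rightarrow> real \<times> ('a \<Rightarrow> real) \<times> (nat \<Rightarrow> 'a \<Rightarrow> real) \<Rightarrow> bool" where
  "good i e \<sigma> \<longleftrightarrow> 0 \<le> e \<and> (e = 0 \<or> (ps_avail (D i) (fst (snd \<sigma>)) \<noteq> {} \<and> fst \<sigma> < 1 \<and>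
      e < min (1 - fst \<sigma>) (mr n (D i) (rr i) (fst (snd \<sigma>)))))"

definition Inv :: "real \<Rightarrow> ('a \<Rightarrow> real) \<Rightarrow> (nat \<Rightarrow> (nat \<Rightarrow> 'a) \<Rightarrow> real) \<Rightarrow> bool" where
  "Inv T s P \<longleftrightarrow> (\<forall>b\<in>all_items p D. 0 \<le> s b) \<and> (\<forall>i<p. (\<Sum>b\<in>D i. s b) = real n * (1 - T)) \<and>
     (\<forall>i<p. \<exists>k e. good i e (psI n (D i) (rr i) k) \<and>
         (T, projs i s, marginal p D P i) = gstep n (D i) (rr i) e (psI n (D i) (rr i) k))"

lemma inv0: "Inv 0 (\<lambda>_. 1) (\<lambda>_ _. 0)"
  unfolding Inv_def
proof (intro conjI allI impI)
  fix i assume i: "i < p"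
  show "(\<Sum>b\<in>D i. (1::real)) = real n * (1 - 0)" using cardD[OF i] by simp
  have "(0::real, projs i (\<lambda>_. 1), marginal p D (\<lambda>_ _. 0) i) = gstep n (D i) (rr i) 0 (psI n (D i) (rr i) 0)"
    by (simp add: gstep0 psI_def projs_def marginal_def fun_eq_iff)
  then show "\<exists>k e. good i e (psI n (D i) (rr i) k) \<and>
         (0, projs i (\<lambda>_. 1), marginal p D (\<lambda>_ _. 0) i) = gstep n (D i) (rr i) e (psI n (D i) (rr i) k)"
    unfolding good_def by blast
qed auto

lemma sum_zero_avail:
  assumes i: "i < p" and nn: "\<forall>b\<in>D i. 0 \<le> s b" and z: "(\<Sum>b\<in>D i. s b) \<le> 0"
  shows "ps_avail (D i) s = {}"
proof -
  have "(\<Sum>b\<in>D i. s b) = 0" using z sum_nonneg[of "D i" s] nn by force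
  then have "\<forall>b\<in>D i. s b = 0" using sum_nonneg_eq_0_iff[OF finD[OF i], of s] nn by blast
  then show ?thesis unfolding ps_avail_def by auto
qed

lemma inv_step:
  assumes I: "Inv T s P" and av: "mps_avail p D s \<noteq> {}"
  defines "d \<equiv> mps_delta n p D imp ord s"
  shows "Inv (T + d) (fst (mps_step n p D imp ord (s, P))) (snd (mps_step n p D imp ord (s, P)))"
proof -
  let ?s' = "\<lambda>b. s b - d * mps_rate n p D imp ord s b"
  let ?P' = "\<lambda>j x. P j x + (if j < n \<and> x = mps_top p D imp ord s j then d else 0)"
  have st: "mps_step n p D imp ord (s, P) = (?s', ?P')" using mps_step_nt[OF av] unfolding d_def by simp
  have nn: "\<forall>b\<in>all_items p D. 0 \<le> s b" and sm: "\<forall>i<p. (\<Sum>b\<in>D i. s b) = real n * (1 - T)"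
    and pj: "\<forall>i<p. \<exists>k e. good i e (psI n (D i) (rr i) k) \<and>
         (T, projs i s, marginal p D P i) = gstep n (D i) (rr i) e (psI n (D i) (rr i) k)"
    using I unfolding Inv_def by auto
  have d0: "d > 0" unfolding d_def by (rule delta_pos[OF av])
  have hd: "\<And>b. b \<in> all_items p D \<Longrightarrow> mps_rate n p D imp ord s b > 0 \<Longrightarrow> d * mps_rate n p D imp ord s b \<le> s b"
    unfolding d_def by (rule delta_le)
  have nn': "\<forall>b\<in>all_items p D. 0 \<le> ?s' b"
  proof
    fix b assume b: "b \<in> all_items p D"
    show "0 \<le> ?s' b"
    proof (cases "mps_rate n p D imp ord s b > 0")
      case True then show ?thesis using hd[OF b True] by simp
    next
      case False
      then have "mps_rate n p D imp ord s b = 0" unfolding mps_rate_def by simp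
      then show ?thesis using nn b by simp
    qed
  qed
  have rsum: "\<And>i. i < p \<Longrightarrow> (\<Sum>b\<in>D i. mps_rate n p D imp ord s b) = real n"
  proof -
    fix i assume i: "i < p"
    interpret Pi: PSL n "D i" "rr i" by (rule PSL_i[OF i])
    have "(\<Sum>b\<in>D i. mps_rate n p D imp ord s b) = (\<Sum>b\<in>D i. ps_rate n (D i) (rr i) s b)"
      using mps_rate_eq[OF av i] by simp
    also have "\<dots> = real n" by (rule Pi.rate_sum[OF avail_type[OF av i]])
    finally show "(\<Sum>b\<in>D i. mps_rate n p D imp ord s b) = real n" .
  qed
  have dT: "d \<le> 1 - T"
  proof -
    have "(\<Sum>b\<in>D 0. d * mps_rate n p D imp ord s b) \<le> (\<Sum>b\<in>D 0. s b)"
    proof (rule sum_mono)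
      fix b assume b: "b \<in> D 0"
      then have b': "b \<in> all_items p D" using Di_all[OF p0] by auto
      show "d * mps_rate n p D imp ord s b \<le> s b"
      proof (cases "mps_rate n p D imp ord s b > 0")
        case True then show ?thesis using hd[OF b' True] by simp
      next
        case False
        then have "mps_rate n p D imp ord s b = 0" unfolding mps_rate_def by simp
        then show ?thesis using nn b' by simp
      qed
    qed
    then have "d * real n \<le> real n * (1 - T)" using rsum[OF p0] sm p0 by (simp add: sum_distrib_left[symmetric])
    then show ?thesis using n0 by (simp add: mult.commute)
  qed
  have sm': "\<forall>i<p. (\<Sum>b\<in>D i. ?s' b) = real n * (1 - (T + d))"
  proof (intro allI impI)
    fix i assume i: "i < p"
    have "(\<Sum>b\<in>D i. ?s' b) = (\<Sum>b\<in>D i. s b) - d * (\<Sum>b\<in>D i. mps_rate n p D imp ord s b)"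
      by (simp add: sum_subtractf sum_distrib_left)
    then show "(\<Sum>b\<in>D i. ?s' b) = real n * (1 - (T + d))" using rsum[OF i] sm i by (simp add: algebra_simps)
  qed
  have pj': "\<forall>i<p. \<exists>k e. good i e (psI n (D i) (rr i) k) \<and>
         (T + d, projs i ?s', marginal p D ?P' i) = gstep n (D i) (rr i) e (psI n (D i) (rr i) k)"
  proof (intro allI impI)
    fix i assume i: "i < p"
    interpret Pi: PSL n "D i" "rr i" by (rule PSL_i[OF i])
    have avi: "ps_avail (D i) s \<noteq> {}" by (rule avail_type[OF av i])
    obtain k e where g: "good i e (psI n (D i) (rr i) k)"
      and eq: "(T, projs i s, marginal p D P i) = gstep n (D i) (rr i) e (psI n (D i) (rr i) k)"
      using pj i by blast
    obtain t s0 Q0 where \<sigma>: "psI n (D i) (rr i) k = (t, s0, Q0)" by (metis prod.exhaust)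
    have e0: "0 \<le> e" using g unfolding good_def by simp
    have eq2: "T = t + e" "projs i s = (\<lambda>b. s0 b - e * ps_rate n (D i) (rr i) s0 b)"
      using eq unfolding \<sigma> gstep_def by auto
    have nt: "ps_avail (D i) s0 \<noteq> {} \<and> t < 1 \<and> e < min (1 - t) (mr n (D i) (rr i) s0)"
    proof (cases "e = 0")
      case True
      then have "(T, projs i s, marginal p D P i) = (t, s0, Q0)" using eq \<sigma> by (simp add: gstep0)
      then have tt: "T = t" "s0 = projs i s" by auto
      have a1: "ps_avail (D i) s0 \<noteq> {}" using tt projs_avail avi by simp
      have "T < 1"
      proof (rule ccontr)
        assume "\<not> T < 1"
        then have "(\<Sum>b\<in>D i. s b) \<le> 0" using sm i by (simp add: mult_nonneg_nonpos)
        then have "ps_avail (D i) s = {}" using sum_zero_avail[OF i] nn Di_all[OF i] by blast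
        then show False using avi by simp
      qed
      then show ?thesis using a1 tt True Pi.mr_pos[OF a1] by simp
    next
      case False
      then show ?thesis using g \<sigma> unfolding good_def by simp
    qed
    have a0: "ps_avail (D i) s0 \<noteq> {}" and emr: "e < mr n (D i) (rr i) s0" using nt by auto
    have av_eq: "ps_avail (D i) (projs i s) = ps_avail (D i) s0"
      unfolding eq2(2) by (rule Pi.avail_keep[OF a0 emr])
    have rate_eq: "ps_rate n (D i) (rr i) s0 = ps_rate n (D i) (rr i) s"
      using ps_rate_cong[OF av_eq] ps_rate_cong[OF projs_avail] by metis
    have step: "(T + d, projs i ?s', marginal p D ?P' i) = gstep n (D i) (rr i) (e + d) (t, s0, Q0)"
    proof -
      have "(T + d, projs i ?s', marginal p D ?P' i) = gstep n (D i) (rr i) d (T, projs i s, marginal p D P i)"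
        using proj_step[OF av i, of T P] unfolding d_def by simp
      also have "\<dots> = gstep n (D i) (rr i) d (gstep n (D i) (rr i) e (t, s0, Q0))" using eq \<sigma> by simp
      also have "\<dots> = gstep n (D i) (rr i) (e + d) (t, s0, Q0)" by (rule Pi.gstep_add[OF a0 emr])
      finally show ?thesis .
    qed
    have b1: "e + d \<le> 1 - t" using dT eq2(1) by simp
    have b2: "e + d \<le> mr n (D i) (rr i) s0"
    proof (rule Pi.mr_bound[OF a0 emr], intro ballI impI)
      fix b assume b: "b \<in> D i" and rp: "ps_rate n (D i) (rr i) s0 b > 0"
      have mr: "mps_rate n p D imp ord s b = ps_rate n (D i) (rr i) s0 b"
        using mps_rate_eq[OF av i b] rate_eq by simp
      have "d * mps_rate n p D imp ord s b \<le> s b" using hd[of b] Di_all[OF i] b rp mr by auto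
      moreover have "s b = s0 b - e * ps_rate n (D i) (rr i) s0 b" using fun_cong[OF eq2(2), of b] b
        by (simp add: projs_def)
      ultimately show "d * ps_rate n (D i) (rr i) s0 b \<le> s0 b - e * ps_rate n (D i) (rr i) s0 b" using mr by simp
    qed
    show "\<exists>k e. good i e (psI n (D i) (rr i) k) \<and>
         (T + d, projs i ?s', marginal p D ?P' i) = gstep n (D i) (rr i) e (psI n (D i) (rr i) k)"
    proof (cases "e + d < min (1 - t) (mr n (D i) (rr i) s0)")
      case True
      have "good i (e + d) (psI n (D i) (rr i) k)" unfolding good_def \<sigma> using True a0 nt e0 d0 by simp
      then show ?thesis using step \<sigma> by metis
    next
      case False
      then have m: "e + d = min (1 - t) (mr n (D i) (rr i) s0)" using b1 b2 by (auto simp: min_def)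
      have "gstep n (D i) (rr i) (e + d) (t, s0, Q0) = psI n (D i) (rr i) (Suc k)"
        unfolding m using \<sigma> a0 nt by (simp add: Pi.psI_Suc ps_step_nonterm)
      then have "(T + d, projs i ?s', marginal p D ?P' i) = gstep n (D i) (rr i) 0 (psI n (D i) (rr i) (Suc k))"
        using step by (simp add: gstep0)
      moreover have "good i 0 (psI n (D i) (rr i) (Suc k))" unfolding good_def by simp
      ultimately show ?thesis by blast
    qed
  qed
  show ?thesis unfolding st Inv_def using nn' sm' pj' by simp
qed


lemma mI_Suc: "mI (Suc k) = mps_step n p D imp ord (mI k)"
  unfolding mI_def by simp

lemma inv_all: "\<exists>T. Inv T (fst (mI k)) (snd (mI k))"
proof (induction k)
  case 0 show ?case using inv0 unfolding mI_def by auto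
next
  case (Suc k)
  then obtain T where I: "Inv T (fst (mI k)) (snd (mI k))" by blast
  show ?case
  proof (cases "mps_avail p D (fst (mI k)) = {}")
    case True
    then have "mI (Suc k) = mI k" by (simp add: mI_Suc mps_step_t)
    then show ?thesis using I by auto
  next
    case False
    have "mI (Suc k) = mps_step n p D imp ord (fst (mI k), snd (mI k))" by (simp add: mI_Suc)
    then show ?thesis using inv_step[OF I False] by metis
  qed
qed

lemma mI_count: "mps_avail p D (fst (mI k)) = {} \<or> k \<le> card {b\<in>all_items p D. fst (mI k) b \<le> 0}"
proof (induction k)
  case 0 then show ?case by simp
next
  case (Suc k)
  obtain s P where e: "mI k = (s, P)" by (metis prod.exhaust)
  show ?case
  proof (cases "mps_avail p D s = {}")
    case True
    then have "mI (Suc k) = mI k" using e by (simp add: mI_Suc mps_step_t)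
    then show ?thesis using True e by simp
  next
    case False
    have k: "k \<le> card {b\<in>all_items p D. s b \<le> 0}" using Suc False e by simp
    let ?d = "mps_delta n p D imp ord s"
    let ?s' = "\<lambda>b. s b - ?d * mps_rate n p D imp ord s b"
    have s': "fst (mI (Suc k)) = ?s'" using e mps_step_nt[OF False] by (simp add: mI_Suc)
    obtain b0 where b0: "b0 \<in> all_items p D" "mps_rate n p D imp ord s b0 > 0"
        "?d = s b0 / mps_rate n p D imp ord s b0"
      using delta_argmin[OF False] by blast
    have "?s' b0 = 0" using b0 by simp
    moreover have "s b0 > 0" using mps_rate_pos[OF False b0(2)] by simp
    moreover have "b \<in> all_items p D \<Longrightarrow> s b \<le> 0 \<Longrightarrow> ?s' b \<le> 0" for b
    proof -
      assume "b \<in> all_items p D" "s b \<le> 0"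
      then have "\<not> mps_rate n p D imp ord s b > 0" using mps_rate_pos[OF False] by force
      then have "mps_rate n p D imp ord s b = 0" unfolding mps_rate_def by simp
      then show ?thesis using \<open>s b \<le> 0\<close> by simp
    qed
    ultimately have sub: "insert b0 {b\<in>all_items p D. s b \<le> 0} \<subseteq> {b\<in>all_items p D. ?s' b \<le> 0}"
      "b0 \<notin> {b\<in>all_items p D. s b \<le> 0}" using b0 by auto
    have "card (insert b0 {b\<in>all_items p D. s b \<le> 0}) \<le> card {b\<in>all_items p D. ?s' b \<le> 0}"
      by (rule card_mono[OF _ sub(1)]) (use fin_all in auto)
    then have "Suc k \<le> card {b\<in>all_items p D. ?s' b \<le> 0}" using sub(2) k fin_all by simp
    then show ?thesis using s' by simp
  qed
qed

lemma mI_final: "mps_avail p D (fst (mI (card (all_items p D)))) = {}"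
proof (rule ccontr)
  let ?K = "card (all_items p D)"
  let ?s = "fst (mI ?K)"
  assume nt: "mps_avail p D ?s \<noteq> {}"
  have "?K \<le> card {b\<in>all_items p D. ?s b \<le> 0}" using mI_count[of ?K] nt by blast
  moreover have "card {b\<in>all_items p D. ?s b \<le> 0} \<le> ?K" by (rule card_mono[OF fin_all]) auto
  ultimately have "card {b\<in>all_items p D. ?s b \<le> 0} = ?K" by simp
  then have all: "{b\<in>all_items p D. ?s b \<le> 0} = all_items p D"
    by (metis (no_types, lifting) card_subset_eq fin_all mem_Collect_eq subsetI)
  obtain x where x: "x \<in> mps_avail p D ?s" using nt by auto
  then have "x 0 \<in> D 0" "?s (x 0) > 0" using p0 by (auto simp: mps_avail_def bundles_def PiE_def Pi_def)
  then show False using all Di_all[OF p0] by force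
qed

theorem main:
  assumes i: "i < p" and j: "j < n" and b: "b \<in> D i"
  shows "marginal p D (MPS n p D imp ord) i j b = PS n (D i) (rr i) j b"
proof -
  interpret Pi: PSL n "D i" "rr i" by (rule PSL_i[OF i])
  let ?K = "card (all_items p D)"
  obtain s P where e: "mI ?K = (s, P)" by (metis prod.exhaust)
  have tm: "mps_avail p D s = {}" using mI_final e by simp
  obtain T where I: "Inv T s P" using inv_all[of ?K] e by auto
  have nn: "\<forall>b\<in>all_items p D. 0 \<le> s b" and sm: "\<forall>i<p. (\<Sum>b\<in>D i. s b) = real n * (1 - T)"
    and pj: "\<forall>i<p. \<exists>k e. good i e (psI n (D i) (rr i) k) \<and>
         (T, projs i s, marginal p D P i) = gstep n (D i) (rr i) e (psI n (D i) (rr i) k)"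
    using I unfolding Inv_def by auto
  obtain i0 where i0: "i0 < p" "ps_avail (D i0) s = {}"
  proof (rule ccontr)
    assume "\<not> thesis"
    then have ne: "\<forall>i<p. ps_avail (D i) s \<noteq> {}" using that by blast
    let ?x = "\<lambda>i. if i < p then (SOME b. b \<in> ps_avail (D i) s) else undefined"
    have "\<forall>i<p. ?x i \<in> ps_avail (D i) s" using ne by (metis all_not_in_conv someI_ex)
    then have "?x \<in> mps_avail p D s"
      unfolding mps_avail_def bundles_def ps_avail_def by (auto simp: PiE_def Pi_def extensional_def)
    then show False using tm by auto
  qed
  have "\<forall>b\<in>D i0. s b \<le> 0" using i0(2) unfolding ps_avail_def by auto
  then have "(\<Sum>b\<in>D i0. s b) = 0" using nn Di_all[OF i0(1)]
    by (metis (no_types, lifting) antisym subsetD sum.neutral)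
  then have T1: "T = 1" using sm i0(1) n0 by simp
  obtain k e where g: "good i e (psI n (D i) (rr i) k)"
    and eq: "(T, projs i s, marginal p D P i) = gstep n (D i) (rr i) e (psI n (D i) (rr i) k)"
    using pj i by blast
  obtain t s0 Q0 where \<sigma>: "psI n (D i) (rr i) k = (t, s0, Q0)" by (metis prod.exhaust)
  have "T = t + e" using eq \<sigma> by (simp add: gstep_def)
  then have "e = 0" using g T1 \<sigma> unfolding good_def by auto
  then have eq0: "(T, projs i s, marginal p D P i) = psI n (D i) (rr i) k" using eq by (simp add: gstep0)
  then have "\<not> (ps_avail (D i) (fst (snd (psI n (D i) (rr i) k))) \<noteq> {} \<and> fst (psI n (D i) (rr i) k) < 1)"
    using T1 by (metis fst_conv less_irrefl)
  then have "psI n (D i) (rr i) (card (D i) + 1) = psI n (D i) (rr i) k" by (rule Pi.psI_final)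
  moreover have "PS n (D i) (rr i) = snd (snd (psI n (D i) (rr i) (card (D i) + 1)))"
    by (simp add: PS_def psI_def)
  ultimately have "PS n (D i) (rr i) = snd (snd (psI n (D i) (rr i) k))" by simp
  also have "\<dots> = marginal p D P i" using eq0[symmetric] by simp
  finally have "PS n (D i) (rr i) = marginal p D P i" .
  moreover have "MPS n p D imp ord = P" unfolding MPS_def using e by (simp add: mI_def)
  ultimately show ?thesis by simp
qed

end

theorem claim1:
  fixes n p :: nat and D :: "nat \<Rightarrow> 'a set"
    and imp :: "nat \<Rightarrow> nat rel" and ord :: "nat \<Rightarrow> nat \<Rightarrow> 'a rel"
  assumes "lex_setting n p D imp ord"
  shows "\<forall>i<p. \<forall>j<n. \<forall>b\<in>D i.
           marginal p D (MPS n p D imp ord) i j b = PS n (D i) (\<lambda>j. ord j i) j b"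
proof (intro allI impI ballI)
  fix i j b assume i: "i < p" and j: "j < n" and b: "b \<in> D i"
  interpret L: LS n p D imp ord
    by unfold_locales (use assms i j in auto)
  show "marginal p D (MPS n p D imp ord) i j b = PS n (D i) (\<lambda>j. ord j i) j b"
    by (rule L.main[OF i j b])
qed

end
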